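(* Let $N \geq 2$ and, for each generation $t \in \{1,2,\dots\}$, let $\nu_t^{(1:N)} = (\nu_t^{(1)},\dots,\nu_t^{(N)})$ be non-negative integers with $\sum_{i=1}^N \nu_t^{(i)} = N$. Define $$c_N(t) := \frac{1}{(N)_2}\sum_{i=1}^N (\nu_t^{(i)})_2, \qquad D_N(t) := \frac{1}{N(N)_2}\sum_{i=1}^N (\nu_t^{(i)})_2\Big\{\nu_t^{(i)} + \frac1N\sum_{j\neq i}(\nu_t^{(j)})^2\Big\},$$ and $\tau_N(u) := \inf\{ s \in \{0,1,2,\dots\} : \sum_{r=1}^s c_N(r) \geq u\}$ for $u \geq 0$ (an empty sum being $0$, so $\tau_N(0)=0$). Then for all $t \in \{1,2,\dots\}$ and all real $t' > s' \geq 0$ with $\tau_N(t') < \infty$: (a) $0 \leq D_N(t) \leq c_N(t) \leq 1$; (b) $t' - (s'+1)\mathbb{1}_{(0,\infty)}(s') \leq \sum_{r=\tau_N(s')+1}^{\tau_N(t')} c_N(r) \leq t'+1$; (c) $\tau_N(t') \geq t'$.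
   Context: $(x)_k := x(x-1)\cdots(x-k+1)$ denotes the falling factorial. $\nu_t^{(i)}$ is interpreted as the number of offspring in generation $t-1$ of individual $i$ in generation $t$ (generations labelled backwards in time), but the claim only uses that the $\nu_t^{(i)}$ are non-negative integers summing to $N$. *)

theory Defs
  imports Complex_Main
begin

definition ff2 :: "nat \<Rightarrow> real" where
  "ff2 x = real x * (real x - 1)"

text \<open>nu t i = offspring count of individual i (1..N) in generation t (t \<ge> 1).\<close>
definition cN :: "nat \<Rightarrow> (nat \<Rightarrow> nat \<Rightarrow> nat) \<Rightarrow> nat \<Rightarrow> real" where
  "cN N nu t = (\<Sum>i=1..N. ff2 (nu t i)) / ff2 N"

definition DN :: "nat \<Rightarrow> (nat \<Rightarrow> nat \<Rightarrow> nat) \<Rightarrow> nat \<Rightarrow> real" where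
  "DN N nu t = (\<Sum>i=1..N. ff2 (nu t i) *
      (real (nu t i) + (1 / real N) * (\<Sum>j\<in>{1..N} - {i}. (real (nu t j))\<^sup>2)))
      / (real N * ff2 N)"

text \<open>tau_N(u) = inf{s \<in> nat. sum_{r=1}^s c_N(r) \<ge> u}; only meaningful (finite) when
  the set is nonempty, which is assumed where it is used.\<close>
definition tauN :: "nat \<Rightarrow> (nat \<Rightarrow> nat \<Rightarrow> nat) \<Rightarrow> real \<Rightarrow> nat" where
  "tauN N nu u = (LEAST s. (\<Sum>r=1..s. cN N nu r) \<ge> u)"

definition tau_finite :: "nat \<Rightarrow> (nat \<Rightarrow> nat \<Rightarrow> nat) \<Rightarrow> real \<Rightarrow> bool" where
  "tau_finite N nu u \<longleftrightarrow> (\<exists>s. (\<Sum>r=1..s. cN N nu r) \<ge> u)"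

end

theory Submission
  imports Defs
begin

lemma split_sum_nat:
  fixes f :: "nat \<Rightarrow> real"
  assumes "a \<le> b"
  shows "(\<Sum>r=1..b. f r) = (\<Sum>r=1..a. f r) + (\<Sum>r=a+1..b. f r)"
  using assms
proof (induction b rule: dec_induct)
  case base then show ?case by simp
next
  case (step n)
  have "(\<Sum>r=a+1..Suc n. f r) = (\<Sum>r=a+1..n. f r) + f (Suc n)"
    using step.hyps by (simp add: sum.cl_ivl_Suc)
  then show ?case using step by simp
qed

lemma div_helper:
  fixes A B n f :: real
  assumes "A \<le> n * B" "n > 0" "f > 0"
  shows "A / (n * f) \<le> B / f"
proof -
  have "A / (n * f) \<le> (n * B) / (n * f)" using assms by (intro divide_right_mono) auto
  also have "\<dots> = B / f" using assms by simp
  finally show ?thesis .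
qed

lemma ff2_nonneg: "ff2 x \<ge> 0"
  unfolding ff2_def by (cases x) auto

lemma nu_le:
  fixes nu :: "nat \<Rightarrow> nat \<Rightarrow> nat"
  assumes "(\<Sum>i=1..N. nu t i) = N" "i \<in> {1..N}"
  shows "nu t i \<le> N"
  using member_le_sum[of i "{1..N}" "nu t"] assms by auto

lemma c_bounds:
  fixes nu :: "nat \<Rightarrow> nat \<Rightarrow> nat"
  assumes N2: "N \<ge> 2" and s: "(\<Sum>i=1..N. nu t i) = N"
  shows "0 \<le> cN N nu t \<and> cN N nu t \<le> 1"
proof -
  have fN: "ff2 N > 0" using N2 unfolding ff2_def by auto
  have "(\<Sum>i=1..N. ff2 (nu t i)) \<le> (\<Sum>i=1..N. real (nu t i) * (real N - 1))"
  proof (rule sum_mono)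
    fix i assume "i \<in> {1..N}"
    then have "nu t i \<le> N" using nu_le[of nu t N i] s by auto
    then show "ff2 (nu t i) \<le> real (nu t i) * (real N - 1)"
      unfolding ff2_def by (intro mult_left_mono) auto
  qed
  also have "\<dots> = real (\<Sum>i=1..N. nu t i) * (real N - 1)"
    by (simp add: sum_distrib_right)
  also have "\<dots> = ff2 N" using s by (simp add: ff2_def)
  finally have "(\<Sum>i=1..N. ff2 (nu t i)) \<le> ff2 N" .
  moreover have "(\<Sum>i=1..N. ff2 (nu t i)) \<ge> 0" by (intro sum_nonneg ff2_nonneg)
  ultimately show ?thesis using fN unfolding cN_def by auto
qed

lemma D_bounds:
  fixes nu :: "nat \<Rightarrow> nat \<Rightarrow> nat"
  assumes N2: "N \<ge> 2" and s: "(\<Sum>i=1..N. nu t i) = N"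
  shows "0 \<le> DN N nu t \<and> DN N nu t \<le> cN N nu t"
proof -
  have fN: "ff2 N > 0" using N2 unfolding ff2_def by auto
  have Npos: "real N > 0" using N2 by auto
  have key: "real (nu t i) + (1 / real N) * (\<Sum>j\<in>{1..N} - {i}. (real (nu t j))\<^sup>2) \<le> real N"
    if i: "i \<in> {1..N}" for i
  proof -
    let ?x = "real (nu t i)"
    have sr: "(\<Sum>j\<in>{1..N}. real (nu t j)) = real N" using s by (metis of_nat_sum)
    have rem: "(\<Sum>j\<in>{1..N} - {i}. real (nu t j)) = real N - ?x"
      using sum_diff1[of "{1..N}" "\<lambda>j. real (nu t j)" i] i sr by simp
    have "(\<Sum>j\<in>{1..N} - {i}. (real (nu t j))\<^sup>2) \<le> (\<Sum>j\<in>{1..N} - {i}. real (nu t j) * (real N - ?x))"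
    proof (rule sum_mono)
      fix j assume j: "j \<in> {1..N} - {i}"
      have "real (nu t j) \<le> (\<Sum>j\<in>{1..N} - {i}. real (nu t j))"
        using member_le_sum[of j "{1..N} - {i}" "\<lambda>j. real (nu t j)"] j by auto
      then have "real (nu t j) \<le> real N - ?x" using rem by simp
      then show "(real (nu t j))\<^sup>2 \<le> real (nu t j) * (real N - ?x)"
        by (simp add: power2_eq_square mult_left_mono)
    qed
    also have "\<dots> = (real N - ?x)^2" using rem by (simp add: power2_eq_square flip: sum_distrib_right)
    finally have y: "(\<Sum>j\<in>{1..N} - {i}. (real (nu t j))\<^sup>2) \<le> (real N - ?x)^2" .
    have xN: "?x \<le> real N" using nu_le[of nu t N i] s i by simp
    have "?x + (1 / real N) * (\<Sum>j\<in>{1..N} - {i}. (real (nu t j))\<^sup>2) \<le> ?x + (1 / real N) * (real N - ?x)^2"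
      using y Npos by (simp add: divide_right_mono)
    also have "\<dots> = real N - ?x * (real N - ?x) / real N"
      using Npos by (simp add: field_simps power2_eq_square)
    also have "\<dots> \<le> real N" using xN Npos by simp
    finally show ?thesis .
  qed
  have "(\<Sum>i=1..N. ff2 (nu t i) *
      (real (nu t i) + (1 / real N) * (\<Sum>j\<in>{1..N} - {i}. (real (nu t j))\<^sup>2)))
      \<le> (\<Sum>i=1..N. ff2 (nu t i) * real N)"
    by (rule sum_mono, rule mult_left_mono[OF key ff2_nonneg]) auto
  also have "\<dots> = real N * (\<Sum>i=1..N. ff2 (nu t i))" by (simp add: sum_distrib_left mult.commute)
  finally have up: "DN N nu t \<le> cN N nu t"
    unfolding DN_def cN_def using fN Npos
    using div_helper by simp
  have "0 \<le> (\<Sum>i=1..N. ff2 (nu t i) *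
      (real (nu t i) + (1 / real N) * (\<Sum>j\<in>{1..N} - {i}. (real (nu t j))\<^sup>2)))"
    by (intro sum_nonneg mult_nonneg_nonneg ff2_nonneg add_nonneg_nonneg) auto
  then have "0 \<le> DN N nu t" unfolding DN_def using fN Npos by simp
  then show ?thesis using up by simp
qed


theorem proposition1:
  fixes N :: nat and nu :: "nat \<Rightarrow> nat \<Rightarrow> nat"
  assumes N2: "N \<ge> 2"
    and sumN: "\<And>t. t \<ge> 1 \<Longrightarrow> (\<Sum>i=1..N. nu t i) = N"
  shows "\<forall>t::nat. \<forall>t' s' :: real. t \<ge> 1 \<and> t' > s' \<and> s' \<ge> 0 \<and> tau_finite N nu t' \<longrightarrow>
     (0 \<le> DN N nu t \<and> DN N nu t \<le> cN N nu t \<and> cN N nu t \<le> 1)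
     \<and> (t' - (s' + 1) * (if s' > 0 then 1 else 0)
          \<le> (\<Sum>r = tauN N nu s' + 1 .. tauN N nu t'. cN N nu r)
        \<and> (\<Sum>r = tauN N nu s' + 1 .. tauN N nu t'. cN N nu r) \<le> t' + 1)
     \<and> real (tauN N nu t') \<ge> t'"
proof (intro allI impI)
  fix t :: nat and t' s' :: real
  assume H: "t \<ge> 1 \<and> t' > s' \<and> s' \<ge> 0 \<and> tau_finite N nu t'"
  define S where "S k = (\<Sum>r=1..k. cN N nu r)" for k
  have c01: "0 \<le> cN N nu r \<and> cN N nu r \<le> 1" if "r \<ge> 1" for r
    using c_bounds[of N nu r] N2 sumN[OF that] by simp
  have Ssuc: "S (Suc k) = S k + cN N nu (Suc k)" for k
    unfolding S_def by (simp add: sum.cl_ivl_Suc)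
  have S0: "S 0 = 0" unfolding S_def by simp
  have Sle: "S k \<le> real k" for k
  proof (induction k)
    case 0 then show ?case using S0 by simp
  next
    case (Suc k) then show ?case using Ssuc[of k] c01[of "Suc k"] by simp
  qed
  have Snn: "S k \<ge> 0" for k
  proof (induction k)
    case 0 then show ?case using S0 by simp
  next
    case (Suc k) then show ?case using Ssuc[of k] c01[of "Suc k"] by simp
  qed
  have tauT: "tauN N nu u = (LEAST s. S s \<ge> u)" for u unfolding tauN_def S_def by simp
  have fin: "\<exists>s. S s \<ge> u" if "u \<le> t'" for u
    using H that unfolding tau_finite_def S_def by (meson order_trans)
  have tau_ge: "S (tauN N nu u) \<ge> u" if "u \<le> t'" for u
    unfolding tauT using LeastI_ex[OF fin[OF that]] .
  have tau_min: "S k < u" if "k < tauN N nu u" for u k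
    using not_less_Least[OF that[unfolded tauT]] by simp
  have tau_up: "S (tauN N nu u) < u + 1" if "u > 0" for u
  proof (cases "tauN N nu u")
    case 0 then show ?thesis using that S0 by simp
  next
    case (Suc k)
    have "S k < u" using tau_min[of k u] Suc by simp
    then show ?thesis using Suc Ssuc[of k] c01[of "Suc k"] by simp
  qed
  have tpos: "t' > 0" using H by simp
  have mono: "tauN N nu s' \<le> tauN N nu t'"
    unfolding tauT using fin[of t'] H by (intro Least_le) (meson LeastI_ex order_trans less_imp_le tauT tau_ge order_refl)
  have split: "S (tauN N nu t') = S (tauN N nu s') + (\<Sum>r = tauN N nu s' + 1 .. tauN N nu t'. cN N nu r)"
    unfolding S_def by (rule split_sum_nat[OF mono])
  have A: "0 \<le> DN N nu t \<and> DN N nu t \<le> cN N nu t \<and> cN N nu t \<le> 1"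
    using D_bounds[of N nu t] c_bounds[of N nu t] N2 sumN H by auto
  have g1: "S (tauN N nu t') \<ge> t'" using tau_ge[of t'] by simp
  have g2: "S (tauN N nu t') < t' + 1" using tau_up tpos by simp
  have low: "t' - (s' + 1) * (if s' > 0 then 1 else 0) \<le> (\<Sum>r = tauN N nu s' + 1 .. tauN N nu t'. cN N nu r)"
  proof (cases "s' > 0")
    case True
    then show ?thesis using tau_up[of s'] split g1 by simp
  next
    case False
    then have "s' = 0" using H by simp
    then have "tauN N nu s' = 0" unfolding tauT using S0 by (intro Least_eq_0) simp
    then show ?thesis using split g1 S0 by simp
  qed
  have up: "(\<Sum>r = tauN N nu s' + 1 .. tauN N nu t'. cN N nu r) \<le> t' + 1"
    using split g2 Snn[of "tauN N nu s'"] by simp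
  have C: "real (tauN N nu t') \<ge> t'" using g1 Sle[of "tauN N nu t'"] by simp
  show "(0 \<le> DN N nu t \<and> DN N nu t \<le> cN N nu t \<and> cN N nu t \<le> 1)
     \<and> (t' - (s' + 1) * (if s' > 0 then 1 else 0)
          \<le> (\<Sum>r = tauN N nu s' + 1 .. tauN N nu t'. cN N nu r)
        \<and> (\<Sum>r = tauN N nu s' + 1 .. tauN N nu t'. cN N nu r) \<le> t' + 1)
     \<and> real (tauN N nu t') \<ge> t'"
    using A low up C by simp
qed

end
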